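(* Let $E$ be a finite set and let $\tau:2^{E}\rightarrow 2^{E}$ be a closure operator. Define $V:2^{E}\rightarrow 2^{E}$ by $V(X)=E-\tau(X)$. Then $(E,V)$ is a violator space.
   Context: A closure operator on $E$ is a map $\tau:2^E\to 2^E$ satisfying, for all $X,Y\subseteq E$: (C1) $X\subseteq\tau(X)$; (C2) $X\subseteq Y\Rightarrow \tau(X)\subseteq\tau(Y)$; (C3) $\tau(\tau(X))=\tau(X)$. A violator space is a pair $(H,V)$ with $H$ a finite set and $V:2^H\to 2^H$ such that (Consistency) $G\cap V(G)=\emptyset$ for all $G\subseteq H$, and (Locality) for all $F\subseteq G\subseteq H$ with $G\cap V(F)=\emptyset$ we have $V(G)=V(F)$. *)

theory Defs
  imports Main
begin

definition closure_operator :: "'a set \<Rightarrow> ('a set \<Rightarrow> 'a set) \<Rightarrow> bool" where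
  "closure_operator E \<tau> \<longleftrightarrow>
     (\<forall>X. X \<subseteq> E \<longrightarrow> \<tau> X \<subseteq> E) \<and>
     (\<forall>X. X \<subseteq> E \<longrightarrow> X \<subseteq> \<tau> X) \<and>
     (\<forall>X Y. X \<subseteq> Y \<and> Y \<subseteq> E \<longrightarrow> \<tau> X \<subseteq> \<tau> Y) \<and>
     (\<forall>X. X \<subseteq> E \<longrightarrow> \<tau> (\<tau> X) = \<tau> X)"

definition violator_space :: "'a set \<Rightarrow> ('a set \<Rightarrow> 'a set) \<Rightarrow> bool" where
  "violator_space H V \<longleftrightarrow> finite H \<and>
     (\<forall>G. G \<subseteq> H \<longrightarrow> V G \<subseteq> H) \<and>
     (\<forall>G. G \<subseteq> H \<longrightarrow> G \<inter> V G = {}) \<and>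
     (\<forall>F G. F \<subseteq> G \<and> G \<subseteq> H \<and> G \<inter> V F = {} \<longrightarrow> V G = V F)"

end

theory Submission
  imports Defs
begin

theorem mainTheorem1:
  fixes E :: "'a set" and \<tau> :: "'a set \<Rightarrow> 'a set"
  assumes "finite E" and "closure_operator E \<tau>"
  shows "violator_space E (\<lambda>X. E - \<tau> X)"
proof -
  have c1: "\<And>X. X \<subseteq> E \<Longrightarrow> \<tau> X \<subseteq> E"
   and c2: "\<And>X. X \<subseteq> E \<Longrightarrow> X \<subseteq> \<tau> X"
   and c3: "\<And>X Y. X \<subseteq> Y \<Longrightarrow> Y \<subseteq> E \<Longrightarrow> \<tau> X \<subseteq> \<tau> Y"
   and c4: "\<And>X. X \<subseteq> E \<Longrightarrow> \<tau> (\<tau> X) = \<tau> X"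
    using assms(2) unfolding closure_operator_def by auto
  have loc: "E - \<tau> G = E - \<tau> F" if "F \<subseteq> G" "G \<subseteq> E" "G \<inter> (E - \<tau> F) = {}" for F G
  proof -
    have FE: "F \<subseteq> E" using that(1,2) by (rule order_trans)
    have "G \<subseteq> \<tau> F" using that(2,3) by blast
    moreover have "\<tau> F \<subseteq> E" using c1 FE by simp
    ultimately have "\<tau> G \<subseteq> \<tau> (\<tau> F)" by (rule c3)
    also have "\<dots> = \<tau> F" using c4 FE by simp
    finally have "\<tau> G \<subseteq> \<tau> F" .
    moreover have "\<tau> F \<subseteq> \<tau> G" using c3 that(1,2) by simp
    ultimately show ?thesis by auto
  qed
  show ?thesis unfolding violator_space_def
  proof (intro conjI allI impI)
    show "finite E" by (rule assms(1))
  next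
    fix G assume "G \<subseteq> E" then show "E - \<tau> G \<subseteq> E" by blast
  next
    fix G assume "G \<subseteq> E" then show "G \<inter> (E - \<tau> G) = {}" using c2[of G] by blast
  next
    fix F G assume "F \<subseteq> G \<and> G \<subseteq> E \<and> G \<inter> (E - \<tau> F) = {}"
    then show "E - \<tau> G = E - \<tau> F" using loc by blast
  qed
qed

end
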